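(* Let $\mathrm{k}$ be an infinite field. For every integer $n\geq4$, the $\mathrm{k}$-algebra $\mathrm{k}[T]/(T^n)$ has infinitely many subalgebras.
   Context: Subalgebras are unital (contain $1$). *)

theory Defs
  imports "HOL-Computational_Algebra.Polynomial"
begin

text \<open>The k-algebra k[T]/(T^n), represented by canonical residues: polynomials of
degree < n, with the usual addition and scalar multiplication, and multiplication
followed by reduction modulo T^n.\<close>

definition trunc_carrier :: "nat \<Rightarrow> 'k::field poly set" where
  "trunc_carrier n = {p. p mod monom 1 n = p}"

definition trunc_mult :: "nat \<Rightarrow> 'k::field poly \<Rightarrow> 'k poly \<Rightarrow> 'k poly" where
  "trunc_mult n p q = (p * q) mod monom 1 n"

definition trunc_subalgebra :: "nat \<Rightarrow> 'k::field poly set \<Rightarrow> bool" where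
  "trunc_subalgebra n S \<longleftrightarrow>
     S \<subseteq> trunc_carrier n \<and>
     0 \<in> S \<and>
     (1 mod monom 1 n) \<in> S \<and>
     (\<forall>p\<in>S. \<forall>q\<in>S. p + q \<in> S) \<and>
     (\<forall>c. \<forall>p\<in>S. smult c p \<in> S) \<and>
     (\<forall>p\<in>S. \<forall>q\<in>S. trunc_mult n p q \<in> S)"

end

theory Submission
  imports Defs
begin

lemma coeff_mod_monom:
  fixes p :: "'k::field poly"
  assumes "i < n"
  shows "coeff (p mod monom 1 n) i = coeff p i"
proof -
  have "p = monom 1 n * (p div monom 1 n) + p mod monom 1 n"
    by (metis div_mult_mod_eq mult.commute)
  hence "coeff p i = coeff (monom 1 n * (p div monom 1 n)) i + coeff (p mod monom 1 n) i"
    by (metis coeff_add)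
  thus ?thesis using assms by (simp add: coeff_monom_mult)
qed

definition SS :: "nat \<Rightarrow> 'k::field \<Rightarrow> 'k poly set" where
  "SS n b = {p. p mod monom 1 n = p \<and> coeff p 1 = 0 \<and> coeff p 3 = b * coeff p 2}"

lemma SS_sub:
  fixes b :: "'k::field"
  assumes "n \<ge> 4"
  shows "trunc_subalgebra n (SS n b)"
proof -
  let ?m = "monom (1::'k) n"
  have one: "1 mod ?m = 1"
    using assms by (intro mod_poly_less) (simp add: degree_monom_eq)
  have mult: "trunc_mult n p q \<in> SS n b" if "p \<in> SS n b" "q \<in> SS n b" for p q
  proof -
    have p: "coeff p 1 = 0" "coeff p 3 = b * coeff p 2" and q: "coeff q 1 = 0" "coeff q 3 = b * coeff q 2"
      using that by (auto simp: SS_def)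
    have c1: "coeff (p*q) 1 = 0" using p q by (simp add: coeff_mult)
    have c2: "coeff (p*q) 2 = coeff p 0 * coeff q 2 + coeff p 2 * coeff q 0"
      using p q by (simp add: coeff_mult numeral_2_eq_2 atMost_Suc)
    have c3: "coeff (p*q) 3 = coeff p 0 * coeff q 3 + coeff p 3 * coeff q 0"
      using p q by (simp add: coeff_mult numeral_3_eq_3 atMost_Suc)
    show ?thesis unfolding trunc_mult_def SS_def using assms c1 c2 c3 p q
      by (simp add: coeff_mod_monom algebra_simps)
  qed
  show ?thesis
    unfolding trunc_subalgebra_def
  proof (intro conjI ballI allI)
    show "SS n b \<subseteq> trunc_carrier n" by (auto simp: SS_def trunc_carrier_def)
    show "0 \<in> SS n b" by (simp add: SS_def)
    show "1 mod ?m \<in> SS n b" unfolding one by (simp add: SS_def one)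
    fix p q assume "p \<in> SS n b" "q \<in> SS n b"
    thus "p + q \<in> SS n b" by (simp add: SS_def poly_mod_add_left algebra_simps)
  next
    fix c p assume "p \<in> SS n b"
    thus "smult c p \<in> SS n b" by (simp add: SS_def mod_smult_left)
  next
    fix p q assume "p \<in> SS n b" "q \<in> SS n b"
    thus "trunc_mult n p q \<in> SS n b" by (rule mult)
  qed
qed

lemma SS_inj:
  fixes b c :: "'k::field"
  assumes "n \<ge> 4" "SS n b = SS n c"
  shows "b = c"
proof -
  let ?x = "monom (1::'k) 2 + monom b 3"
  have "degree ?x < n"
    using assms(1) by (intro le_less_trans[OF degree_add_le_max]) (auto simp: degree_monom_le le_less_trans[OF degree_monom_le])
  hence "?x mod monom 1 n = ?x" by (intro mod_poly_less) (simp add: degree_monom_eq)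
  hence "?x \<in> SS n b" by (simp add: SS_def)
  hence "?x \<in> SS n c" using assms by simp
  thus ?thesis by (simp add: SS_def)
qed

theorem lemma3p4:
  fixes n :: nat
  assumes "infinite (UNIV :: 'k::field set)"
    and "n \<ge> 4"
  shows "infinite {S :: 'k poly set. trunc_subalgebra n S}"
proof
  assume f: "finite {S :: 'k poly set. trunc_subalgebra n S}"
  have "range (SS n :: 'k \<Rightarrow> _) \<subseteq> {S. trunc_subalgebra n S}"
    using SS_sub[OF assms(2)] by auto
  hence "finite (range (SS n :: 'k \<Rightarrow> _))" using f finite_subset by blast
  moreover have "inj (SS n :: 'k \<Rightarrow> _)" by (rule injI) (rule SS_inj[OF assms(2)])
  ultimately show False using assms(1) finite_imageD by blast
qed

end
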